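(* Let $\mathcal{O}=(O_1,\ldots,O_n)$ be a chain and $2\le i\le n$. Let $r_i,r_{i-1}$ be the radii and $o_i,o_{i-1}$ the centers of $O_i,O_{i-1}$. Then $H_i=||o_io_{i-1}||$ and $V_i\ge|r_i-r_{i-1}|$.
   Context: All objects lie in the Euclidean plane; a "circle" means a closed disk; $||pq||$ is Euclidean distance. Chain. A sequence of distinct finite closed disks $(O_1,\ldots,O_n)$ is a chain if: (1) every two consecutive disks $O_i,O_{i+1}$ intersect; let $a_i,b_i$ be the common points of their boundary circles ($a_i=b_i$ if tangent), labelled so that all the $a_i$ lie on one side of the chain and all the $b_i$ on the other. Let $C_i^{(i+1)}$ be the arc of the boundary of $O_i$ lying in $O_{i+1}$ and $C_{i+1}^{(i)}$ the arc of the boundary of $O_{i+1}$ lying in $O_i$. (2) For $2\le i\le n-1$, the arcs $C_i^{(i-1)}$ and $C_i^{(i+1)}$ share no point other than a boundary point. For $2\le i\le n$, choose coordinates in which $o_{i-1},o_i$ lie on a horizontal line and $a_{i-1}$ is on or above that line. Let $q_{i-1}^{\rightarrow}$ (resp. $q_i^{\leftarrow}$) be the point of the upper boundary of $O_{i-1}$ (resp. $O_i$) farthest from the line $o_{i-1}o_i$. Let $Q_{i-1}^{\rightarrow}$ be the upper arc of the boundary of $O_{i-1}$ between $q_{i-1}^{\rightarrow}$ and $a_{i-1}$, and $Q_i^{\leftarrow}$ the upper arc of the boundary of $O_i$ between $q_i^{\leftarrow}$ and $a_{i-1}$. $Q_{i-1}^{\rightarrow}$ is colored red if it lies inside $O_i$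 and green otherwise; $Q_i^{\leftarrow}$ is red if it lies inside $O_{i-1}$ and green otherwise. Let $\mathcal{P}_i$ be the path from $q_{i-1}^{\rightarrow}$ to $q_i^{\leftarrow}$ formed by $Q_{i-1}^{\rightarrow}$ and $Q_i^{\leftarrow}$. $H_i$ (resp. $V_i$) is the horizontal (resp. vertical) distance traveled along $\mathcal{P}_i$, green arcs contributing positively and red arcs negatively. *)

theory Defs
  imports "HOL-Analysis.Analysis"
begin

text \<open>Points of the plane are pairs of reals; fst = horizontal, snd = vertical coordinate.
  A closed disk is given by its center and (positive) radius; its boundary circle is sphere.\<close>

type_synonym pt = "real \<times> real"

definition cross2 :: "pt \<Rightarrow> pt \<Rightarrow> real" where
  "cross2 u v = fst u * snd v - snd u * fst v"

definition arc_in :: "(nat \<Rightarrow> pt) \<Rightarrow> (nat \<Rightarrow> real) \<Rightarrow> nat \<Rightarrow> nat \<Rightarrow> pt set" where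
  "arc_in c r j k = sphere (c j) (r j) \<inter> cball (c k) (r k)"

text \<open>Chain of disks O_1..O_n (centers c, radii r), with labelled common boundary points
  a_j, b_j of O_j and O_{j+1}; all a_j lie on one side of the chain (same side of the
  directed segments c_j -> c_{j+1}), all b_j on the other.\<close>
definition is_chain ::
  "nat \<Rightarrow> (nat \<Rightarrow> pt) \<Rightarrow> (nat \<Rightarrow> real) \<Rightarrow> (nat \<Rightarrow> pt) \<Rightarrow> (nat \<Rightarrow> pt) \<Rightarrow> bool" where
  "is_chain n c r a b \<longleftrightarrow>
     (\<forall>j\<in>{1..n}. 0 < r j) \<and>
     inj_on (\<lambda>j. (c j, r j)) {1..n} \<and>
     (\<forall>j\<in>{1..<n}. sphere (c j) (r j) \<inter> sphere (c (Suc j)) (r (Suc j)) = {a j, b j}) \<and>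
     (\<exists>\<sigma>\<in>{-1, 1::real}. \<forall>j\<in>{1..<n}.
         0 \<le> \<sigma> * cross2 (c (Suc j) - c j) (a j - c j) \<and>
         \<sigma> * cross2 (c (Suc j) - c j) (b j - c j) \<le> 0) \<and>
     (\<forall>j\<in>{2..<n}. arc_in c r j (j - 1) \<inter> arc_in c r j (Suc j)
                    \<subseteq> {a (j - 1), b (j - 1), a j, b j})"

definition top_pt :: "pt \<Rightarrow> real \<Rightarrow> pt" where
  "top_pt z \<rho> = (fst z, snd z + \<rho>)"

text \<open>Upper arc of the circle (center z, radius rho, z on the horizontal line) between
  the top point and the point p (p on the upper half of that circle).\<close>
definition upper_arc :: "pt \<Rightarrow> real \<Rightarrow> pt \<Rightarrow> pt set" where
  "upper_arc z \<rho> p = {w \<in> sphere z \<rho>. snd z \<le> snd w \<and>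
       min (fst p) (fst z) \<le> fst w \<and> fst w \<le> max (fst p) (fst z)}"

text \<open>Colour sign: red (-1) if the arc lies inside the disk D, green (+1) otherwise.\<close>
definition colour :: "pt set \<Rightarrow> pt set \<Rightarrow> real" where
  "colour A D = (if A \<subseteq> D then -1 else 1)"

text \<open>H_i and V_i computed in the coordinates given by the isometry T.  Along each
  arc (contained in an upper semicircle, between the top point and a_{i-1}) both coordinates
  are monotone, so horizontal/vertical distance travelled is the absolute coordinate change.\<close>
definition H_val :: "(pt \<Rightarrow> pt) \<Rightarrow> (nat \<Rightarrow> pt) \<Rightarrow> (nat \<Rightarrow> real) \<Rightarrow> (nat \<Rightarrow> pt) \<Rightarrow> nat \<Rightarrow> real" where
  "H_val T c r a i =
     (let z1 = T (c (i - 1)); z2 = T (c i); p = T (a (i - 1));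
          Q1 = upper_arc z1 (r (i - 1)) p; Q2 = upper_arc z2 (r i) p
      in colour Q1 (cball z2 (r i)) * \<bar>fst p - fst (top_pt z1 (r (i - 1)))\<bar>
       + colour Q2 (cball z1 (r (i - 1))) * \<bar>fst (top_pt z2 (r i)) - fst p\<bar>)"

definition V_val :: "(pt \<Rightarrow> pt) \<Rightarrow> (nat \<Rightarrow> pt) \<Rightarrow> (nat \<Rightarrow> real) \<Rightarrow> (nat \<Rightarrow> pt) \<Rightarrow> nat \<Rightarrow> real" where
  "V_val T c r a i =
     (let z1 = T (c (i - 1)); z2 = T (c i); p = T (a (i - 1));
          Q1 = upper_arc z1 (r (i - 1)) p; Q2 = upper_arc z2 (r i) p
      in colour Q1 (cball z2 (r i)) * \<bar>snd p - snd (top_pt z1 (r (i - 1)))\<bar>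
       + colour Q2 (cball z1 (r (i - 1))) * \<bar>snd (top_pt z2 (r i)) - snd p\<bar>)"

end

theory Submission
  imports Defs
begin

lemma dist_sq: fixes u v :: pt
  shows "(dist u v)^2 = (fst u - fst v)^2 + (snd u - snd v)^2"
  by (cases u; cases v) (simp add: dist_Pair_Pair dist_real_def)

lemma colour_lemma:
  fixes z1 z2 p :: pt
  assumes "snd z1 = snd z2" "dist z1 p = r1" "dist z2 p = r2" "snd z1 \<le> snd p" "r1 \<ge> 0" "r2 \<ge> 0"
  shows "colour (upper_arc z1 r1 p) (cball z2 r2) =
          (if (fst p - fst z1)*(fst z2 - fst z1) \<le> 0 then -1 else 1)"
proof -
  have e1: "r1^2 = (fst z1 - fst p)^2 + (snd z1 - snd p)^2" using dist_sq[of z1 p] assms by simp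
  have e2: "r2^2 = (fst z2 - fst p)^2 + (snd z1 - snd p)^2" using dist_sq[of z2 p] assms by simp
  show ?thesis
  proof (cases "(fst p - fst z1)*(fst z2 - fst z1) \<le> 0")
    case True
    have "upper_arc z1 r1 p \<subseteq> cball z2 r2"
    proof
      fix w assume w: "w \<in> upper_arc z1 r1 p"
      hence ws: "dist z1 w = r1" and wx: "min (fst p) (fst z1) \<le> fst w" "fst w \<le> max (fst p) (fst z1)"
        by (auto simp: upper_arc_def)
      have ew: "r1^2 = (fst z1 - fst w)^2 + (snd z1 - snd w)^2" using dist_sq[of z1 w] ws by simp
      have key: "(fst z2 - fst z1) * (fst w - fst p) \<ge> 0"
      proof (cases "fst p \<le> fst z1")
        case c: True
        hence "fst p \<le> fst w" "fst w \<le> fst z1" using wx by auto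
        moreover have "fst z2 \<ge> fst z1 \<or> fst p = fst z1"
        proof (rule ccontr)
          assume "\<not> ?thesis"
          hence "fst p - fst z1 < 0" "fst z2 - fst z1 < 0" using c by auto
          hence "(fst p - fst z1)*(fst z2 - fst z1) > 0" by (rule mult_neg_neg)
          thus False using True by simp
        qed
        ultimately show ?thesis by (auto intro: mult_nonneg_nonneg)
      next
        case c: False
        hence "fst z1 \<le> fst w" "fst w \<le> fst p" using wx by auto
        moreover have "fst z2 \<le> fst z1"
        proof (rule ccontr)
          assume "\<not> ?thesis"
          hence "fst p - fst z1 > 0" "fst z2 - fst z1 > 0" using c by auto
          hence "(fst p - fst z1)*(fst z2 - fst z1) > 0" by (rule mult_pos_pos)
          thus False using True by simp
        qed
        ultimately show ?thesis by (simp add: mult_nonpos_nonpos)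
      qed
      have "(dist z2 w)^2 = (fst z2 - fst w)^2 + (snd z1 - snd w)^2"
        using dist_sq[of z2 w] assms(1) by simp
      also have "\<dots> = r2^2 - 2 * ((fst z2 - fst z1) * (fst w - fst p))"
        using e1 e2 ew by (simp add: power2_eq_square algebra_simps)
      also have "\<dots> \<le> r2^2" using key by simp
      finally have "(dist z2 w)^2 \<le> r2^2" .
      hence "dist z2 w \<le> r2" using assms(6) by (rule power2_le_imp_le)
      thus "w \<in> cball z2 r2" by simp
    qed
    thus ?thesis using True by (simp add: colour_def)
  next
    case False
    have t: "top_pt z1 r1 \<in> upper_arc z1 r1 p"
    proof -
      have "(dist z1 (top_pt z1 r1))^2 = r1^2" using dist_sq[of z1 "top_pt z1 r1"] by (simp add: top_pt_def)
      hence "dist z1 (top_pt z1 r1) = r1" using assms(5) by (simp add: power2_eq_iff_nonneg)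
      thus ?thesis using assms(5) by (simp add: upper_arc_def top_pt_def)
    qed
    have "(dist z2 (top_pt z1 r1))^2 = (fst z2 - fst z1)^2 + r1^2"
      using dist_sq[of z2 "top_pt z1 r1"] assms(1) by (simp add: top_pt_def)
    also have "\<dots> = r2^2 + 2 * ((fst p - fst z1)*(fst z2 - fst z1))"
      using e1 e2 by (simp add: power2_eq_square algebra_simps)
    finally have "(dist z2 (top_pt z1 r1))^2 > r2^2" using False by simp
    hence "dist z2 (top_pt z1 r1) > r2" using zero_le_dist
      by (rule power_less_imp_less_base)
    hence "\<not> upper_arc z1 r1 p \<subseteq> cball z2 r2" using t by auto
    thus ?thesis using False by (simp add: colour_def)
  qed
qed

lemma H_arith:
  fixes x1 x2 px :: real
  assumes "x1 \<noteq> x2"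
  shows "(if (px-x1)*(x2-x1) \<le> 0 then -1 else 1) * \<bar>px - x1\<bar>
       + (if (px-x2)*(x1-x2) \<le> 0 then -1 else 1) * \<bar>x2 - px\<bar> = \<bar>x2 - x1\<bar>"
proof (cases "x1 < x2")
  case True
  thus ?thesis by (auto simp: mult_le_0_iff)
next
  case False
  hence "x2 < x1" using assms by simp
  thus ?thesis by (auto simp: mult_le_0_iff)
qed

lemma V_arith:
  fixes x1 x2 px y py r1 r2 :: real
  assumes "x1 \<noteq> x2" "r1 \<ge> 0" "r2 \<ge> 0" "y \<le> py"
    and e1: "r1^2 = (x1 - px)^2 + (y - py)^2"
    and e2: "r2^2 = (x2 - px)^2 + (y - py)^2"
  shows "(if (px-x1)*(x2-x1) \<le> 0 then -1 else 1) * \<bar>py - (y + r1)\<bar>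
       + (if (px-x2)*(x1-x2) \<le> 0 then -1 else 1) * \<bar>(y + r2) - py\<bar> \<ge> \<bar>r2 - r1\<bar>"
proof -
  have "(py - y)^2 \<le> r1^2" using e1 by (simp add: power2_commute)
  hence t1: "py - y \<le> r1" using assms(2) by (rule power2_le_imp_le)
  have "(py - y)^2 \<le> r2^2" using e2 by (simp add: power2_commute)
  hence t2: "py - y \<le> r2" using assms(3) by (rule power2_le_imp_le)
  have sq: "(x2 - x1)^2 > 0" using assms(1) by simp
  have d: "r2^2 - r1^2 = (x2-x1)^2 + 2*((x1-px)*(x2-x1))"
    using e1 e2 by (simp add: power2_eq_square algebra_simps)
  have d': "r1^2 - r2^2 = (x2-x1)^2 + 2*((x2-px)*(x1-x2))"
    using e1 e2 by (simp add: power2_eq_square algebra_simps)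
  have notboth: "\<not> ((px-x1)*(x2-x1) \<le> 0 \<and> (px-x2)*(x1-x2) \<le> 0)"
  proof
    assume h: "(px-x1)*(x2-x1) \<le> 0 \<and> (px-x2)*(x1-x2) \<le> 0"
    have "(px-x1)*(x2-x1) + (px-x2)*(x1-x2) = (x2-x1)^2"
      by (simp add: power2_eq_square algebra_simps)
    thus False using h sq by linarith
  qed
  show ?thesis
  proof (cases "(px-x1)*(x2-x1) \<le> 0")
    case c1: True
    hence c2: "\<not> (px-x2)*(x1-x2) \<le> 0" using notboth by blast
    have "(x1-px)*(x2-x1) \<ge> 0" using c1 by (simp add: algebra_simps)
    hence "r1^2 \<le> r2^2" using d sq by linarith
    hence "r1 \<le> r2" using assms(3) by (rule power2_le_imp_le)
    thus ?thesis using c1 c2 t1 t2 by simp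
  next
    case c1: False
    show ?thesis
    proof (cases "(px-x2)*(x1-x2) \<le> 0")
      case c2: True
      have "(x2-px)*(x1-x2) \<ge> 0" using c2 by (simp add: algebra_simps)
      hence "r2^2 \<le> r1^2" using d' sq by linarith
      hence "r2 \<le> r1" using assms(2) by (rule power2_le_imp_le)
      thus ?thesis using c1 c2 t1 t2 by simp
    next
      case c2: False
      thus ?thesis using c1 t1 t2 by simp
    qed
  qed
qed

theorem fact2:
  fixes n i :: nat and c :: "nat \<Rightarrow> pt" and r :: "nat \<Rightarrow> real" and a b :: "nat \<Rightarrow> pt"
    and T :: "pt \<Rightarrow> pt"
  assumes "is_chain n c r a b"
    and "2 \<le> i" and "i \<le> n"
    and "\<forall>x y. dist (T x) (T y) = dist x y"
    and "snd (T (c (i - 1))) = snd (T (c i))"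
    and "snd (T (c (i - 1))) \<le> snd (T (a (i - 1)))"
  shows "H_val T c r a i = dist (c i) (c (i - 1))
         \<and> V_val T c r a i \<ge> \<bar>r i - r (i - 1)\<bar>"
proof -
  define j where "j = i - 1"
  have ij: "Suc j = i" "i - 1 = j" using assms(2) by (auto simp: j_def)
  have jr: "j \<in> {1..<n}" "i \<in> {1..n}" "j \<in> {1..n}" using assms(2,3) by (auto simp: j_def)
  from assms(1) have pos: "\<forall>k\<in>{1..n}. 0 < r k" and inj: "inj_on (\<lambda>k. (c k, r k)) {1..n}"
    and sph: "\<forall>k\<in>{1..<n}. sphere (c k) (r k) \<inter> sphere (c (Suc k)) (r (Suc k)) = {a k, b k}"
    unfolding is_chain_def by blast+
  have "a j \<in> sphere (c j) (r j) \<inter> sphere (c i) (r i)" using sph jr(1) ij by blast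
  hence da1: "dist (c j) (a j) = r j" and da2: "dist (c i) (a j) = r i" by auto
  have r1: "r j > 0" and r2: "r i > 0" using pos jr by auto
  have cne: "c i \<noteq> c j"
  proof
    assume h: "c i = c j"
    hence "r i = r j" using da1 da2 by simp
    hence "(c i, r i) = (c j, r j)" using h by simp
    hence "i = j" using inj jr by (auto dest: inj_onD)
    thus False using ij by simp
  qed
  define z1 where "z1 = T (c j)"
  define z2 where "z2 = T (c i)"
  define p where "p = T (a j)"
  have Td: "dist (T x) (T y) = dist x y" for x y using assms(4) by blast
  have D1: "dist z1 p = r j" using Td da1 by (simp add: z1_def p_def)
  have D2: "dist z2 p = r i" using Td da2 by (simp add: z2_def p_def)
  have sy: "snd z1 = snd z2" using assms(5) by (simp add: z1_def z2_def j_def)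
  have sp: "snd z1 \<le> snd p" using assms(6) by (simp add: z1_def p_def j_def)
  have D12: "dist (c i) (c j) = dist z2 z1" using Td by (simp add: z1_def z2_def)
  have "(dist z2 z1)^2 = (fst z2 - fst z1)^2" using dist_sq[of z2 z1] sy by simp
  hence "(dist z2 z1)^2 = \<bar>fst z2 - fst z1\<bar>^2" by simp
  hence dz: "dist z2 z1 = \<bar>fst z2 - fst z1\<bar>" using power2_eq_iff_nonneg zero_le_dist abs_ge_zero by blast
  have "dist (c i) (c j) > 0" using cne by simp
  hence "dist z2 z1 > 0" using D12 by simp
  hence xne: "fst z1 \<noteq> fst z2" using dz by auto
  have col1: "colour (upper_arc z1 (r j) p) (cball z2 (r i)) =
          (if (fst p - fst z1)*(fst z2 - fst z1) \<le> 0 then -1 else 1)"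
    using colour_lemma[OF sy D1 D2 sp] r1 r2 by simp
  have col2: "colour (upper_arc z2 (r i) p) (cball z1 (r j)) =
          (if (fst p - fst z2)*(fst z1 - fst z2) \<le> 0 then -1 else 1)"
    using colour_lemma[OF sy[symmetric] D2 D1] sp sy r1 r2 by simp
  have e1: "(r j)^2 = (fst z1 - fst p)^2 + (snd z1 - snd p)^2" using dist_sq[of z1 p] D1 by simp
  have e2: "(r i)^2 = (fst z2 - fst p)^2 + (snd z1 - snd p)^2" using dist_sq[of z2 p] D2 sy by simp
  have H: "H_val T c r a i = dist (c i) (c (i - 1))"
    unfolding H_val_def Let_def ij z1_def[symmetric] z2_def[symmetric] p_def[symmetric] col1 col2
    using H_arith[OF xne, of "fst p"] D12 dz by (simp add: top_pt_def)
  have V: "V_val T c r a i \<ge> \<bar>r i - r (i - 1)\<bar>"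
    unfolding V_val_def Let_def ij z1_def[symmetric] z2_def[symmetric] p_def[symmetric] col1 col2
    using V_arith[OF xne _ _ sp e1, of "r i"] e2 r1 r2 sy by (simp add: top_pt_def)
  show ?thesis using H V by blast
qed

end
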